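(* For each $0\le s\le L$, the space $V_L^s$ is stable under $Q(z;p)$, and $Q(z;p)|_{V_L^s}$ is a polynomial in $z$ of degree exactly $s$ with coefficients in $\mathrm{End}(V_L^s)[[p]]$.
   Context: All vector spaces are over $\mathbb C$. Let $V^\infty$ have basis $(w_i)_{i\in\mathbb Z_{\ge0}}$, graded with $w_i$ of weight $i$. For $\ell\in\mathbb C$, $\mathcal W^\ell$ denotes the representation of the Yangian-type algebra $\mathbb Y^1$ on $V^\infty$ given by the operators ($w_{-1}=0$): $t_{11}(z)w_i=(z+\ell-i)w_i$, $t_{12}(z)w_i=(\ell-i)w_{i+1}$, $t_{21}(z)w_i=iw_{i-1}$, $t_{22}(z)w_i=(z+i)w_i$, and $T^{\mathcal W^\ell}(z)=\sum_{i,j=1}^2E_{ij}\otimes t_{ij}(z)\in\mathrm{End}(\mathbb C^2\otimes V^\infty)[z]$ where $E_{ij}$ are the elementary matrices for a basis $(v_1,v_2)$ of $\mathbb C^2$ (these satisfy the RTT relation $R^{12}(z-w)T^{13}(z)T^{23}(w)=T^{23}(w)T^{13}(z)R^{12}(z-w)$ with Yang's $R(z)=\frac{z}{z+1}\mathrm{Id}+\frac{1}{z+1}P$, $P$ the flip). Fix $L\in\mathbb Z_{>0}$ and $a_1,\dots,a_L\in\mathbb C^\times$. Let $V_L=(\mathbb C^2)^{\otimes L}$ and, for $0\le s\le L$, let $V_L^s$ be the span of the $v_{i_1}\otimes\cdots\otimes v_{i_L}$ in which the index $1$ appears exactly $s$ times. For a graded module $W=\bigoplus_\alpha W_\alpha$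 with finite-dimensional weight spaces, weights bounded below, and $T^W(z)=\sum E_{ij}\otimes t^W_{ij}(z)$, the monodromy matrix is $T^{W,L}(z)=T^W(z+a_1)_{1,L+1}T^W(z+a_2)_{2,L+1}\cdots T^W(z+a_L)_{L,L+1}\in\mathrm{End}(V_L\otimes W)$, where the subscript $(l,L+1)$ means acting on the $l$-th factor of $V_L$ and on $W$, and the transfer matrix is $t_W(z;p)=\sum_{\alpha}p^\alpha(\mathrm{Id}_{V_L}\otimes\mathrm{Tr}_{W_\alpha})(T^{W,L}(z))$, $p$ a formal variable. The Baxter Q-operator is $Q(z;p):=t_{\mathcal W^z}(0;p)$, i.e. the transfer matrix of $\mathcal W^\ell$ evaluated at spectral parameter $0$ with spin parameter $\ell=z$; it lies in $\mathrm{End}(V_L)[z][[p]]$. *)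

theory Defs
  imports "HOL-Computational_Algebra.Polynomial" "HOL-Computational_Algebra.Formal_Power_Series"
begin

(* Vectors of V^\<infinity> with coefficients in C[z] (the spin parameter l = z is the
   polynomial variable): coefficient functions  k \<mapsto> coefficient of w_k.
   tW i j u  is the operator t_ij(u) of W^z  (with l := z). *)
definition tW :: "nat \<Rightarrow> nat \<Rightarrow> complex \<Rightarrow> (nat \<Rightarrow> complex poly) \<Rightarrow> (nat \<Rightarrow> complex poly)" where
  "tW i j u v =
    (if i = 1 \<and> j = 1 then (\<lambda>k. [:u - of_nat k, 1:] * v k)
     else if i = 1 \<and> j = 2 then (\<lambda>k. if k = 0 then 0 else [:- of_nat (k - 1), 1:] * v (k - 1))
     else if i = 2 \<and> j = 1 then (\<lambda>k. [:of_nat (k + 1):] * v (k + 1))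
     else if i = 2 \<and> j = 2 then (\<lambda>k. [:u + of_nat k:] * v k)
     else (\<lambda>k. 0))"

(* Vectors of V_L \<otimes> W: functions (index list e = (i_1..i_L), weight k) \<mapsto> coefficient of
   v_{i_1}\<otimes>...\<otimes>v_{i_L}\<otimes>w_k.  T_loc u l = T^W(u)_{l,L+1}, acting on the l-th tensor
   factor of V_L (0-based) and on W. *)
definition T_loc :: "complex \<Rightarrow> nat \<Rightarrow> (nat list \<Rightarrow> nat \<Rightarrow> complex poly) \<Rightarrow> (nat list \<Rightarrow> nat \<Rightarrow> complex poly)" where
  "T_loc u l X = (\<lambda>e k. \<Sum>b\<in>{1,2}. tW (e ! l) b u (\<lambda>m. X (e[l := b]) m) k)"

(* mono a m = T^W(0 + a_1)_{1} T^W(0 + a_2)_{2} ... T^W(0 + a_m)_{m} *)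
fun mono :: "complex list \<Rightarrow> nat \<Rightarrow> (nat list \<Rightarrow> nat \<Rightarrow> complex poly) \<Rightarrow> (nat list \<Rightarrow> nat \<Rightarrow> complex poly)" where
  "mono a 0 X = X"
| "mono a (Suc m) X = mono a m (T_loc (a ! m) m X)"

(* Matrix entry (e,f) of Q(z;p) = t_{W^z}(0;p): \<Sum>_n p^n <v_e \<otimes> w_n, T^{W,L}(0) (v_f \<otimes> w_n)>,
   each weight space W_n being spanned by w_n. *)
definition Qentry :: "complex list \<Rightarrow> nat list \<Rightarrow> nat list \<Rightarrow> complex poly fps" where
  "Qentry a e f = Abs_fps (\<lambda>n. mono a (length a) (\<lambda>e' k. if e' = f \<and> k = n then 1 else 0) e n)"

(* basis indices of V_L and of V_L^s *)
definition idx :: "nat \<Rightarrow> nat list set" where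
  "idx L = {e. length e = L \<and> set e \<subseteq> {1, 2}}"

definition sector :: "nat \<Rightarrow> nat \<Rightarrow> nat list set" where
  "sector L s = {e \<in> idx L. count_list e 1 = s}"

end

theory Submission
  imports Defs
begin

lemma count_upd:
  "l < length e \<Longrightarrow> int (count_list (e[l:=b]) x) + (if e!l = x then 1 else 0)
      = int (count_list e x) + (if b = x then 1 else 0)"
proof (induction e arbitrary: l)
  case Nil then show ?case by simp
next
  case (Cons y e)
  show ?case
  proof (cases l)
    case 0 then show ?thesis by auto
  next
    case (Suc j)
    then have "j < length e" using Cons.prems by simp
    from Cons.IH[OF this] Suc show ?thesis by auto
  qed
qed

definition consv :: "nat \<Rightarrow> int \<Rightarrow> (nat list \<Rightarrow> nat \<Rightarrow> complex poly) \<Rightarrow> bool" where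
  "consv L c X = (\<forall>e k. length e = L \<longrightarrow> int (count_list e 1) - int k \<noteq> c \<longrightarrow> X e k = 0)"

lemma sum12: "(\<Sum>b\<in>{1::nat,2}. g b) = g 1 + g 2" by simp

lemma T_consv:
  assumes X: "consv L c X" and l: "l < L"
  shows "consv L c (T_loc u l X)"
  unfolding consv_def
proof (intro allI impI)
  fix e :: "nat list" and k assume len: "length e = L" and ne: "int (count_list e 1) - int k \<noteq> c"
  have le: "l < length e" using len l by simp
  have X0: "X e' k' = 0" if "length e' = L" "int (count_list e' 1) - int k' \<noteq> c" for e' k'
    using X that unfolding consv_def by blast
  note c1 = count_upd[OF le, where b="1::nat" and x="1::nat"] and c2 = count_upd[OF le, where b="2::nat" and x="1::nat"]
  show "T_loc u l X e k = 0"
  proof (cases "e ! l = 1")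
    case True
    have e1: "e[l:=1] = e" using True by (metis list_update_id)
    have a: "X e k = 0" using X0[OF len ne] .
    have b: "k \<noteq> 0 \<Longrightarrow> X (e[l:=2]) (k-1) = 0"
      using c2 True ne len by (intro X0) auto
    show ?thesis unfolding T_loc_def sum12 using True e1 a b by (simp add: tW_def)
  next
    case F: False
    show ?thesis
    proof (cases "e ! l = 2")
      case True
      have e2: "e[l:=2] = e" using True by (metis list_update_id)
      have a: "X e k = 0" using X0[OF len ne] .
      have b: "X (e[l:=1]) (k+1) = 0"
        using c1 True ne len by (intro X0) auto
      show ?thesis unfolding T_loc_def sum12 using True e2 a b by (simp add: tW_def)
    next
      case False
      then show ?thesis unfolding T_loc_def sum12 using F by (simp add: tW_def)
    qed
  qed
qed

lemma mono_consv: "consv L c X \<Longrightarrow> m \<le> L \<Longrightarrow> consv L c (mono a m X)"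
proof (induction m arbitrary: X)
  case 0 then show ?case by simp
next
  case (Suc m)
  then show ?case using T_consv by simp
qed

definition dg :: "nat \<Rightarrow> nat \<Rightarrow> (nat list \<Rightarrow> nat \<Rightarrow> complex poly) \<Rightarrow> bool" where
  "dg L m X = (\<forall>e k. length e = L \<longrightarrow> degree (X e k) \<le> count_list (drop m e) 1)"

lemma T_dg:
  assumes X: "dg L (Suc m) X" and l: "m < L"
  shows "dg L m (T_loc u m X)"
  unfolding dg_def
proof (intro allI impI)
  fix e :: "nat list" and k assume len: "length e = L"
  have le: "m < length e" using len l by simp
  have dr: "drop m e = e!m # drop (Suc m) e" using le by (simp add: Cons_nth_drop_Suc)
  have D: "degree (X (e[m:=b]) k') \<le> count_list (drop (Suc m) e) 1" for b k'
    using X len unfolding dg_def by (metis drop_update_cancel length_list_update lessI)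
  show "degree (T_loc u m X e k) \<le> count_list (drop m e) 1"
  proof (cases "e ! m = 1")
    case True
    have "degree (T_loc u m X e k) \<le> max (degree ([:u - of_nat k, 1:] * X (e[m:=1]) k))
        (degree (if k = 0 then 0 else [:- of_nat (k - 1), 1:] * X (e[m:=2]) (k - 1)))"
      unfolding T_loc_def sum12 using True by (simp add: tW_def degree_add_le_max)
    also have "\<dots> \<le> 1 + count_list (drop (Suc m) e) 1"
    proof -
      have "degree ([:u - of_nat k, 1:] * X (e[m:=1]) k) \<le> 1 + count_list (drop (Suc m) e) 1"
        using degree_mult_le[of "[:u - of_nat k, 1:]" "X (e[m:=1]) k"] D[of 1 k] by simp
      moreover have "degree (if k = 0 then 0 else [:- of_nat (k - 1), 1:] * X (e[m:=2]) (k - 1))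
          \<le> 1 + count_list (drop (Suc m) e) 1"
      proof (cases "k = 0")
        case True then show ?thesis by simp
      next
        case False
        define q :: "complex poly" where "q = [:- of_nat (k - 1), 1:]"
        have dq: "degree q = 1" unfolding q_def by simp
        have "degree (q * X (e[m:=2]) (k - 1)) \<le> degree q + degree (X (e[m:=2]) (k - 1))"
          by (rule degree_mult_le)
        then have "degree (q * X (e[m:=2]) (k - 1)) \<le> 1 + count_list (drop (Suc m) e) 1"
          using dq D[of 2 "k-1"] by linarith
        then show ?thesis using False unfolding q_def by simp
      qed
      ultimately show ?thesis by simp
    qed
    finally show ?thesis using dr True by simp
  next
    case F: False
    show ?thesis
    proof (cases "e ! m = 2")
      case True
      have "degree (T_loc u m X e k) \<le> max (degree ([:of_nat (k + 1):] * X (e[m:=1]) (k+1)))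
        (degree ([:u + of_nat k:] * X (e[m:=2]) k))"
      proof -
        have "T_loc u m X e k = [:of_nat (k + 1):] * X (e[m:=1]) (k+1) + [:u + of_nat k:] * X (e[m:=2]) k"
          unfolding T_loc_def sum12 tW_def using True by simp
        then show ?thesis by (simp only: degree_add_le_max)
      qed
      also have "\<dots> \<le> count_list (drop (Suc m) e) 1"
        using degree_mult_le[of "[:of_nat (k + 1):]" "X (e[m:=1]) (k+1)"] D[of 1 "k+1"]
          degree_mult_le[of "[:u + of_nat k:]" "X (e[m:=2]) k"] D[of 2 k] by simp
      finally show ?thesis using dr True by simp
    next
      case False
      then show ?thesis unfolding T_loc_def sum12 using F by (simp add: tW_def)
    qed
  qed
qed

lemma mono_dg: "dg L m X \<Longrightarrow> m \<le> L \<Longrightarrow> dg L 0 (mono a m X)"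
proof (induction m arbitrary: X)
  case 0 then show ?case by simp
next
  case (Suc m)
  then show ?case using T_dg by simp
qed

definition ag :: "nat list \<Rightarrow> nat \<Rightarrow> (nat list \<Rightarrow> nat \<Rightarrow> complex poly) \<Rightarrow> bool" where
  "ag f m Y = (\<forall>e k. Y e k \<noteq> 0 \<longrightarrow> take m e = take m f)"

definition cf :: "nat list \<Rightarrow> complex list \<Rightarrow> nat \<Rightarrow> complex poly" where
  "cf f a l = (if f ! l = 1 then [:a ! l, 1:] else [:a ! l:])"

lemma T_ag:
  assumes Y: "ag f (Suc m) Y"
  shows "ag f m (T_loc u m Y)"
  unfolding ag_def
proof (intro allI impI)
  fix e k assume ne: "T_loc u m Y e k \<noteq> 0"
  have "\<exists>b k'. Y (e[m:=b]) k' \<noteq> 0"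
  proof (rule ccontr)
    assume "\<not> ?thesis"
    then have "\<And>b k'. Y (e[m:=b]) k' = 0" by blast
    then have "T_loc u m Y e k = 0" unfolding T_loc_def sum12 by (simp add: tW_def)
    with ne show False by simp
  qed
  then obtain b k' where "Y (e[m:=b]) k' \<noteq> 0" by blast
  then have "take (Suc m) (e[m:=b]) = take (Suc m) f" using Y unfolding ag_def by blast
  then have "take m (take (Suc m) (e[m:=b])) = take m (take (Suc m) f)" by simp
  then show "take m e = take m f" by (simp add: min_def)
qed

lemma T_diag:
  assumes Y: "ag f (Suc m) Y" and m: "m < length f" and f: "set f \<subseteq> {1,2}"
  shows "T_loc (a ! m) m Y f 0 = cf f a m * Y f 0"
proof -
  have fm: "f ! m \<in> {1,2}" using m f nth_mem by blast
  show ?thesis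
  proof (cases "f ! m = 1")
    case True
    have e1: "f[m:=1] = f" using True by (metis list_update_id)
    show ?thesis unfolding T_loc_def sum12 cf_def using True e1 by (simp add: tW_def)
  next
    case False
    then have f2: "f ! m = 2" using fm by auto
    have e2: "f[m:=2] = f" using f2 by (metis list_update_id)
    have z: "Y (f[m:=1]) 1 = 0"
    proof (rule ccontr)
      assume "Y (f[m:=1]) 1 \<noteq> 0"
      then have "take (Suc m) (f[m:=1]) = take (Suc m) f" using Y unfolding ag_def by blast
      then have "take (Suc m) (f[m:=1]) ! m = take (Suc m) f ! m" by simp
      then show False using m f2 by simp
    qed
    show ?thesis unfolding T_loc_def sum12 cf_def using f2 e2 z by (simp add: tW_def)
  qed
qed

lemma mono_diag:
  "ag f m Y \<Longrightarrow> m \<le> length f \<Longrightarrow> set f \<subseteq> {1,2} \<Longrightarrow>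
     mono a m Y f 0 = (\<Prod>l<m. cf f a l) * Y f 0"
proof (induction m arbitrary: Y)
  case 0 then show ?case by simp
next
  case (Suc m)
  have "mono a (Suc m) Y f 0 = mono a m (T_loc (a ! m) m Y) f 0" by simp
  also have "\<dots> = (\<Prod>l<m. cf f a l) * T_loc (a ! m) m Y f 0"
    using Suc T_ag by simp
  also have "\<dots> = (\<Prod>l<m. cf f a l) * (cf f a m * Y f 0)"
    using T_diag[of f m Y a] Suc by simp
  finally show ?case by (simp add: mult.assoc)
qed

lemma sum_count: "(\<Sum>l<length f. if f ! l = x then 1 else (0::nat)) = count_list f x"
proof (induction f)
  case Nil then show ?case by simp
next
  case (Cons y f)
  show ?case using Cons by (simp add: sum.lessThan_Suc_shift del: sum.lessThan_Suc)
qed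

theorem mainTheorem15:
  fixes a :: "complex list" and s :: nat
  assumes "length a > 0" and "\<forall>x\<in>set a. x \<noteq> 0" and "s \<le> length a"
  shows "(\<forall>f\<in>sector (length a) s. \<forall>e\<in>idx (length a). e \<notin> sector (length a) s \<longrightarrow> Qentry a e f = 0)
       \<and> (\<forall>k>s. \<forall>e\<in>sector (length a) s. \<forall>f\<in>sector (length a) s. \<forall>n.
             coeff (fps_nth (Qentry a e f) n) k = 0)
       \<and> (\<exists>e\<in>sector (length a) s. \<exists>f\<in>sector (length a) s. \<exists>n.
             coeff (fps_nth (Qentry a e f) n) s \<noteq> 0)"
proof (intro conjI)
  define L where "L = length a"
  define bas where "bas f n = (\<lambda>e' k. if e' = f \<and> k = n then (1::complex poly) else 0)" for f :: "nat list" and n :: nat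
  have Qn: "fps_nth (Qentry a e f) n = mono a L (bas f n) e n" for e f n
    unfolding Qentry_def bas_def L_def by simp
  show "\<forall>f\<in>sector (length a) s. \<forall>e\<in>idx (length a). e \<notin> sector (length a) s \<longrightarrow> Qentry a e f = 0"
  proof (intro ballI impI)
    fix f e assume f: "f \<in> sector (length a) s" and e: "e \<in> idx (length a)" and ns: "e \<notin> sector (length a) s"
    have cf: "count_list f 1 = s" using f unfolding sector_def by simp
    have ce: "count_list e 1 \<noteq> s" and le: "length e = L" using e ns unfolding sector_def idx_def L_def by auto
    show "Qentry a e f = 0"
    proof (rule fps_ext)
      fix n
      have "consv L (int s - int n) (bas f n)" unfolding consv_def bas_def using cf by auto
      then have "consv L (int s - int n) (mono a L (bas f n))" using mono_consv by blast
      then have "mono a L (bas f n) e n = 0" unfolding consv_def using le ce by auto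
      then show "fps_nth (Qentry a e f) n = fps_nth 0 n" using Qn by simp
    qed
  qed
  show "\<forall>k>s. \<forall>e\<in>sector (length a) s. \<forall>f\<in>sector (length a) s. \<forall>n.
             coeff (fps_nth (Qentry a e f) n) k = 0"
  proof (intro allI impI ballI)
    fix k e f n assume k: "s < k" and e: "e \<in> sector (length a) s" and f: "f \<in> sector (length a) s"
    have ce: "count_list e 1 = s" and le: "length e = L" using e unfolding sector_def idx_def L_def by auto
    have "dg L L (bas f n)" unfolding dg_def bas_def by simp
    then have "dg L 0 (mono a L (bas f n))" using mono_dg by blast
    then have "degree (mono a L (bas f n) e n) \<le> s" unfolding dg_def using le ce by auto
    then show "coeff (fps_nth (Qentry a e f) n) k = 0" using Qn k by (simp add: coeff_eq_0)
  qed
  show "\<exists>e\<in>sector (length a) s. \<exists>f\<in>sector (length a) s. \<exists>n.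
             coeff (fps_nth (Qentry a e f) n) s \<noteq> 0"
  proof -
    define f0 where "f0 = replicate s (1::nat) @ replicate (L - s) 2"
    have lf: "length f0 = L" using assms(3) unfolding f0_def L_def by simp
    have sf: "set f0 \<subseteq> {1,2}" unfolding f0_def by auto
    have cf0: "count_list f0 1 = s" unfolding f0_def by (simp add: count_list_eq_length_filter)
    have f0s: "f0 \<in> sector (length a) s" unfolding sector_def idx_def using lf sf cf0 L_def by simp
    have "ag f0 L (bas f0 0)" unfolding ag_def bas_def by auto
    then have M: "mono a L (bas f0 0) f0 0 = (\<Prod>l<L. cf f0 a l)"
      using mono_diag[of f0 L "bas f0 0" a] lf sf by (simp add: bas_def)
    have nz: "cf f0 a l \<noteq> 0" if "l < L" for l
    proof -
      have "a ! l \<noteq> 0" using assms(2) that L_def nth_mem by blast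
      then show ?thesis unfolding cf_def by simp
    qed
    have P0: "(\<Prod>l<L. cf f0 a l) \<noteq> 0" using nz by (simp add: prod_zero_iff)
    have "degree (\<Prod>l<L. cf f0 a l) = (\<Sum>l<L. degree (cf f0 a l))"
      using nz by (intro degree_prod_sum_eq) auto
    also have "\<dots> = (\<Sum>l<length f0. if f0 ! l = 1 then 1 else 0)"
      using lf unfolding cf_def by (intro sum.cong) auto
    also have "\<dots> = s" using sum_count[of f0 1] cf0 by simp
    finally have dgs: "degree (\<Prod>l<L. cf f0 a l) = s" .
    have cs: "coeff (\<Prod>l<L. cf f0 a l) s \<noteq> 0"
      using dgs P0 by (metis leading_coeff_0_iff)
    have "coeff (fps_nth (Qentry a f0 f0) 0) s \<noteq> 0"
      using Qn[of f0 f0 0] M cs by simp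
    then show ?thesis using f0s by blast
  qed
qed

end
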